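(* Let $\lambda>0$. For $\gamma>1$ let $B=B(\gamma)=\frac{\gamma-1}{2\gamma(\gamma+1)}$ and let $A=A(\gamma)>0$ be determined by \[2A^{\frac{\gamma+1}{2(\gamma-1)}}B^{-\frac12}\int_0^{\pi/2}(\cos\theta)^{\frac{\gamma+1}{\gamma-1}}d\theta=\lambda,\] and define $\mathcal{B}_\gamma(\xi)=\big[A-B\xi^2\big]_+^{\frac{1}{\gamma-1}}$ for $\xi\in\mathbb{R}$, where $[f]_+=\max\{f,0\}$ (so that the Barenblatt solution of $\partial_t\overline\rho_\gamma=\partial_x^2(\overline\rho_\gamma^{\,\gamma})$, $\overline\rho_\gamma(-1,\cdot)=\lambda\delta$, is $\overline\rho_\gamma(t,x)=(1+t)^{-\frac{1}{\gamma+1}}\mathcal{B}_\gamma\big(x(1+t)^{-\frac{1}{\gamma+1}}\big)$). Then \[\mathcal{B}_\gamma\longrightarrow\frac{\lambda}{2\sqrt{\pi}}e^{-\frac{\xi^2}{4}}\quad\text{in } L^\infty(\mathbb{R})\ \text{as }\gamma\to1.\] *)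

theory Defs
  imports "HOL-Analysis.Analysis"
begin

definition barenblatt_B :: "real \<Rightarrow> real" where
  "barenblatt_B \<gamma> = (\<gamma> - 1) / (2 * \<gamma> * (\<gamma> + 1))"

definition barenblatt_A_condition :: "real \<Rightarrow> real \<Rightarrow> real \<Rightarrow> bool" where
  "barenblatt_A_condition mass \<gamma> A \<longleftrightarrow>
     A > 0 \<and>
     2 * A powr ((\<gamma> + 1) / (2 * (\<gamma> - 1))) * barenblatt_B \<gamma> powr (-1/2)
       * integral {0..pi/2} (\<lambda>\<theta>. cos \<theta> powr ((\<gamma> + 1) / (\<gamma> - 1))) = mass"

definition barenblatt_profile :: "real \<Rightarrow> real \<Rightarrow> real \<Rightarrow> real" where
  "barenblatt_profile A \<gamma> \<xi> = (max (A - barenblatt_B \<gamma> * \<xi>\<^sup>2) 0) powr (1 / (\<gamma> - 1))"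

end

theory Submission
  imports Defs
begin


definition Iw :: "nat \<Rightarrow> real" where
  "Iw n = integral {0..pi/2} (\<lambda>t. cos t ^ n)"

lemma cos_pow_int: "(\<lambda>t::real. cos t ^ n) integrable_on {a..b}"
  by (rule integrable_continuous_interval) (intro continuous_intros)

lemma alg_aux: "s * s = 1 - c * c \<Longrightarrow> (k+1) * x * (- s) * s + x * (c * c) = (k+2) * x * (c * c) - (k+1) * (x::real)"
  by algebra

lemma Iw_rec: "(real n + 2) * Iw (n+2) = (real n + 1) * Iw n"
proof -
  let ?f = "\<lambda>t. cos t ^ (n+1) * sin t"
  let ?f' = "\<lambda>t. (real n + 2) * cos t ^ (n+2) - (real n + 1) * cos t ^ n"
  have "(?f' has_integral (?f (pi/2) - ?f 0)) {0..pi/2}"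
  proof (rule fundamental_theorem_of_calculus)
    fix x :: real
    have "(?f has_real_derivative ((real n + 1) * cos x ^ n * (- sin x) * sin x + cos x ^ (n+1) * cos x)) (at x)"
      by (rule derivative_eq_intros refl)+ simp
    moreover have "(real n + 1) * cos x ^ n * (- sin x) * sin x + cos x ^ (n+1) * cos x = ?f' x"
    proof -
      have e: "sin x * sin x = 1 - cos x * cos x" using sin_squared_eq[of x] by (simp add: power2_eq_square)
      have "\<And>c s x::real. s * s = 1 - c * c \<Longrightarrow> (real n + 1) * x * (- s) * s + x * (c * c) = (real n + 2) * x * (c * c) - (real n + 1) * x"
        by (rule alg_aux)
      from this[OF e, of "cos x ^ n"] show ?thesis by (simp add: power_add ac_simps)
    qed
    ultimately show "(?f has_vector_derivative ?f' x) (at x within {0..pi/2})"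
      by (metis has_real_derivative_iff_has_vector_derivative has_field_derivative_at_within)
  qed simp
  hence "integral {0..pi/2} ?f' = 0" by (simp add: integral_unique)
  moreover have "integral {0..pi/2} ?f' = (real n + 2) * Iw (n+2) - (real n + 1) * Iw n"
  proof -
    have i1: "(\<lambda>t. (real n + 2) * cos t ^ (n+2)) integrable_on {0..pi/2}"
      by (rule integrable_continuous_interval) (intro continuous_intros)
    have i2: "(\<lambda>t. (real n + 1) * cos t ^ n) integrable_on {0..pi/2}"
      by (rule integrable_continuous_interval) (intro continuous_intros)
    show ?thesis unfolding Iw_def integral_diff[OF i1 i2] by simp
  qed
  ultimately show ?thesis by simp
qed

lemma Iw0: "Iw 0 = pi/2" unfolding Iw_def by simp

lemma Iw1: "Iw (Suc 0) = 1"
proof -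
  have "(cos has_integral (sin (pi/2) - sin 0)) {0..pi/2}"
    by (rule fundamental_theorem_of_calculus) (auto intro!: derivative_eq_intros simp: has_real_derivative_iff_has_vector_derivative[symmetric])
  hence "integral {0..pi/2} cos = 1" by (simp add: integral_unique)
  thus ?thesis unfolding Iw_def by simp
qed

lemma Iw_J: "real (n+1) * Iw n * Iw (n+1) = pi/2"
proof (induction n)
  case 0 then show ?case by (simp add: Iw0 Iw1)
next
  case (Suc n)
  have "real (Suc n + 1) * Iw (Suc n) * Iw (Suc n + 1) = Iw (Suc n) * ((real n + 2) * Iw (n+2))"
    by (simp add: algebra_simps)
  also have "\<dots> = Iw (Suc n) * (real n + 1) * Iw n" using Iw_rec[of n] by simp
  also have "\<dots> = real (n+1) * Iw n * Iw (n+1)" by simp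
  finally show ?case using Suc.IH by linarith
qed

lemma Iw_nonneg: "Iw n \<ge> 0"
  unfolding Iw_def by (rule integral_nonneg) (auto intro!: cos_pow_int cos_ge_zero zero_le_power)

lemma Iw_mono: "Iw (Suc n) \<le> Iw n"
  unfolding Iw_def
proof (rule integral_le[OF cos_pow_int cos_pow_int])
  fix t assume "t \<in> {0..pi/2}"
  hence "0 \<le> cos t" "cos t \<le> 1" by (auto intro!: cos_ge_zero)
  thus "cos t ^ Suc n \<le> cos t ^ n" by (simp add: mult_left_le_one_le)
qed

definition Ir :: "real \<Rightarrow> real" where
  "Ir p = integral {0..pi/2} (\<lambda>t. cos t powr p)"

lemma cos_powr_int: "p > 0 \<Longrightarrow> (\<lambda>t. cos t powr p) integrable_on {0..pi/2}"
  by (intro integrable_continuous_interval continuous_on_powr' continuous_intros)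
     (auto intro!: cos_ge_zero)

lemma Ir_Iw: "n \<ge> 1 \<Longrightarrow> Ir (real n) = Iw n"
  unfolding Ir_def Iw_def
proof (rule integral_cong)
  fix t assume n: "n \<ge> 1" and "t \<in> {0..pi/2}"
  hence c: "cos t \<ge> 0" by (auto intro!: cos_ge_zero)
  show "cos t powr real n = cos t ^ n"
  proof (cases "cos t = 0")
    case True thus ?thesis using n by simp
  next
    case False thus ?thesis using c by (simp add: powr_realpow)
  qed
qed

lemma Ir_mono: assumes "0 < p" "p \<le> q" shows "Ir q \<le> Ir p"
  unfolding Ir_def
proof (rule integral_le[OF cos_powr_int cos_powr_int])
  fix t assume "t \<in> {0..pi/2}"
  hence c: "0 \<le> cos t" "cos t \<le> 1" by (auto intro!: cos_ge_zero)
  show "cos t powr q \<le> cos t powr p"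
  proof (cases "cos t = 0")
    case True thus ?thesis by simp
  next
    case False thus ?thesis using c assms by (intro powr_mono') auto
  qed
qed (use assms in auto)

lemma Ir_nonneg: "p > 0 \<Longrightarrow> Ir p \<ge> 0"
  unfolding Ir_def by (auto intro!: integral_nonneg cos_powr_int)



lemma Ir_bounds:
  assumes p: "p \<ge> 1"
  shows "(p - 1) / (p + 1) * (pi/2) \<le> p * Ir p ^ 2" "p * Ir p ^ 2 \<le> (p + 1) / p * (pi/2)"
proof -
  define n where "n = nat \<lfloor>p\<rfloor>"
  have n1: "n \<ge> 1" using p unfolding n_def by linarith
  have np: "real n \<le> p" "p < real n + 1" using p unfolding n_def by linarith+
  have up: "Ir p \<le> Iw n" using Ir_mono[of "real n" p] np n1 Ir_Iw[OF n1] by simp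
  have lo: "Iw (n+1) \<le> Ir p" using Ir_mono[of p "real (n+1)"] np p Ir_Iw[of "n+1"] by simp
  have J0: "(real n + 1) * Iw n * Iw (n+1) = pi/2" using Iw_J[of n] by (simp add: add.commute)
  have J1: "(real n + 2) * Iw (n+1) * Iw (n+2) = pi/2" using Iw_J[of "n+1"] by (simp add: add.commute)
  have R: "(real n + 2) * Iw (n+2) = (real n + 1) * Iw n" by (rule Iw_rec)
  have m1: "Iw (n+2) \<le> Iw (n+1)" using Iw_mono[of "n+1"] by simp
  have m0: "Iw (n+1) \<le> Iw n" using Iw_mono[of n] by simp
  have nn: "Iw (n+2) \<ge> 0" "Iw (n+1) \<ge> 0" "Iw n \<ge> 0" by (rule Iw_nonneg)+
  have Irn: "Ir p \<ge> 0" using Ir_nonneg[of p] p by simp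
  have "p * Ir p ^ 2 \<le> (real n + 1) * Iw n ^ 2"
  proof -
    have "Ir p ^ 2 \<le> Iw n ^ 2" using up Irn by (simp add: power_mono)
    thus ?thesis using np Irn by (intro mult_mono) auto
  qed
  also have "(real n + 1) * Iw n ^ 2 \<le> (real n + 2) / (real n + 1) * (pi/2)"
  proof -
    have "(real n + 1) * Iw n \<le> (real n + 2) * Iw (n+1)" using R m1 by (smt (verit) mult_left_mono of_nat_0_le_iff)
    hence "(real n + 1) * Iw n * ((real n + 1) * Iw n) \<le> (real n + 2) * Iw (n+1) * ((real n + 1) * Iw n)"
      using nn by (intro mult_right_mono) auto
    also have "\<dots> = (real n + 2) * ((real n + 1) * Iw n * Iw (n+1))" by (simp only: ac_simps)
    also have "\<dots> = (real n + 2) * (pi/2)" by (simp only: J0)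
    finally have "(real n + 1) * ((real n + 1) * Iw n ^ 2) \<le> (real n + 2) * (pi/2)" by (simp add: algebra_simps power2_eq_square)
    thus ?thesis by (simp add: field_simps)
  qed
  also have "\<dots> \<le> (p + 1) / p * (pi/2)"
  proof (rule mult_right_mono)
    show "(real n + 2) / (real n + 1) \<le> (p + 1) / p" using np p n1 by (simp add: field_simps)
  qed simp
  finally show "p * Ir p ^ 2 \<le> (p + 1) / p * (pi/2)" .
  have "(p - 1) / (p + 1) * (pi/2) \<le> real n / (real n + 2) * (pi/2)"
  proof (rule mult_right_mono)
    show "(p - 1) / (p + 1) \<le> real n / (real n + 2)" using np p n1 by (simp add: field_simps)
  qed simp
  also have "real n / (real n + 2) * (pi/2) \<le> real n * Iw (n+1) ^ 2"
  proof -
    have "real n / (real n + 2) * (pi/2) = real n * (Iw (n+1) * Iw (n+2))" using J1 by (simp add: field_simps)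
    also have "\<dots> \<le> real n * Iw (n+1) ^ 2" using m1 nn by (intro mult_left_mono) (auto simp: power2_eq_square intro: mult_left_mono)
    finally show ?thesis .
  qed
  also have "\<dots> \<le> p * Ir p ^ 2"
  proof -
    have "Iw (n+1) ^ 2 \<le> Ir p ^ 2" using lo nn by (simp add: power_mono)
    thus ?thesis using np by (intro mult_mono) auto
  qed
  finally show "(p - 1) / (p + 1) * (pi/2) \<le> p * Ir p ^ 2" .
qed



lemma bern_real:
  fixes m y :: real
  assumes m: "m \<ge> 1" and y: "0 \<le> y" "y \<le> 1"
  shows "1 - m * y \<le> (1 - y) powr m"
proof (cases "y = 1")
  case True thus ?thesis using m by simp
next
  case False
  hence y1: "y < 1" using y by simp
  define f where "f = (\<lambda>z::real. (1 - z) powr m - 1 + m * z)"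
  have "f 0 \<le> f y"
  proof (rule DERIV_nonneg_imp_nondecreasing[OF y(1)])
    fix x assume x: "0 \<le> x" "x \<le> y"
    hence x1: "1 - x > 0" using y1 by simp
    have "(f has_real_derivative (m * (1 - x) powr (m - 1) * (-1) + m)) (at x)"
      unfolding f_def using x1 by (auto intro!: derivative_eq_intros)
    moreover have "(1 - x) powr (m - 1) \<le> 1" using x1 x m by (intro powr_le1) auto
    hence "m * (1 - x) powr (m - 1) * (-1) + m \<ge> 0" using m by (simp add: mult_left_le_one_le)
    ultimately show "\<exists>d. (f has_real_derivative d) (at x) \<and> 0 \<le> d" by blast
  qed
  thus ?thesis unfolding f_def by simp
qed

lemma t_exp_le: "(t::real) * exp (- t) \<le> 1"
proof -
  have "t \<le> exp t" using exp_ge_add_one_self[of t] by linarith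
  thus ?thesis by (simp add: exp_minus field_simps)
qed

lemma sq_exp_le: "(s::real) \<ge> 0 \<Longrightarrow> s^2 * exp (- s) \<le> 4"
proof -
  assume s: "s \<ge> 0"
  have "s^2 * exp (-s) = 4 * ((s/2) * exp (-(s/2)))^2"
    by (simp add: power2_eq_square field_simps flip: exp_add)
  also have "\<dots> \<le> 4 * 1"
  proof -
    have a: "(s/2) * exp (-(s/2)) \<le> 1" by (rule t_exp_le)
    have "0 \<le> (s/2) * exp (-(s/2))" using s by simp
    with a have "((s/2) * exp (-(s/2)))^2 \<le> 1" by (simp add: power_le_one)
    thus ?thesis by simp
  qed
  finally show ?thesis by simp
qed

lemma h_approx:
  fixes m s :: real
  assumes m: "m \<ge> 1" and s: "s \<ge> 0"
  shows "\<bar>max (1 - s/m) 0 powr m - exp (-s)\<bar> \<le> 4 / m"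
proof (cases "s \<le> m")
  case False
  hence "max (1 - s/m) 0 = 0" using m by (simp add: field_simps)
  hence "max (1 - s/m) 0 powr m = 0" by simp
  moreover have "exp (-s) \<le> 4 / m"
  proof -
    have "exp (-s) \<le> exp (-m)" using False by simp
    also have "\<dots> \<le> 1 / m"
    proof -
      have "m \<le> exp m" using exp_ge_add_one_self[of m] by linarith
      thus ?thesis using m by (simp add: exp_minus field_simps)
    qed
    also have "\<dots> \<le> 4 / m" using m by (simp add: divide_right_mono)
    finally show ?thesis .
  qed
  ultimately show ?thesis by simp
next
  case True
  define x where "x = s / m"
  have x: "0 \<le> x" "x \<le> 1" using True s m by (auto simp: x_def field_simps)
  have mx: "m * x = s" using m by (simp add: x_def)
  have mx0: "max (1 - s/m) 0 = 1 - x" using x by (simp add: x_def)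
  have up: "(1 - x) powr m \<le> exp (-s)"
  proof -
    have "(1 - x) powr m \<le> exp (-x) powr m"
      using exp_ge_add_one_self[of "-x"] x m by (intro powr_mono2) auto
    also have "\<dots> = exp (-s)" using mx by (simp add: powr_def ln_exp flip: mx)
    finally show ?thesis .
  qed
  have lo: "exp (-s) * (1 - s^2 / m) \<le> (1 - x) powr m"
  proof -
    have "1 - x^2 \<le> (1 - x) * exp x"
    proof -
      have "(1 - x) * (1 + x) \<le> (1 - x) * exp x"
        using exp_ge_add_one_self[of x] x by (intro mult_left_mono) auto
      thus ?thesis by (simp add: power2_eq_square algebra_simps)
    qed
    hence "(1 - x^2) powr m \<le> ((1 - x) * exp x) powr m"
      using x m by (intro powr_mono2) (auto simp: power_le_one)
    moreover have "1 - m * x^2 \<le> (1 - x^2) powr m"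
      using x m by (intro bern_real) (auto simp: power_le_one)
    moreover have "((1 - x) * exp x) powr m = (1 - x) powr m * exp s"
      using x by (simp add: powr_mult exp_powr_real flip: mx)
    moreover have "m * x^2 = s^2 / m" using m by (simp add: x_def power2_eq_square field_simps)
    ultimately have "1 - s^2/m \<le> (1 - x) powr m * exp s" by linarith
    hence "exp (-s) * (1 - s^2/m) \<le> exp (-s) * ((1 - x) powr m * exp s)"
      by (intro mult_left_mono) auto
    also have "\<dots> = (1 - x) powr m" by (simp add: exp_minus field_simps)
    finally show ?thesis .
  qed
  have "exp (-s) - (1 - x) powr m \<le> s^2 * exp (-s) / m"
    using lo by (simp add: algebra_simps)
  also have "\<dots> \<le> 4 / m" using sq_exp_le[OF s] m by (simp add: divide_right_mono)
  finally show ?thesis using up mx0 by simp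
qed

lemma exp_rate_aux:
  fixes a b t :: real
  assumes "0 < a" "a \<le> b" "0 \<le> t"
  shows "0 \<le> exp (-a*t) - exp (-b*t) \<and> exp (-a*t) - exp (-b*t) \<le> (b - a) / a"
proof
  show "0 \<le> exp (-a*t) - exp (-b*t)" using assms by (simp add: mult_right_mono)
  have "exp (-a*t) - exp (-b*t) = exp (-a*t) * (1 - exp (-((b-a)*t)))"
    by (simp add: algebra_simps flip: exp_add)
  also have "\<dots> \<le> exp (-a*t) * ((b-a)*t)"
    using exp_ge_add_one_self[of "-((b-a)*t)"] by (intro mult_left_mono) auto
  also have "\<dots> = (b - a) / a * ((a*t) * exp (-(a*t)))" using assms by (simp add: field_simps)
  also have "\<dots> \<le> (b - a) / a * 1"
    using assms by (intro mult_left_mono t_exp_le) auto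
  finally show "exp (-a*t) - exp (-b*t) \<le> (b - a) / a" by simp
qed

lemma exp_rate:
  fixes a b t :: real
  assumes "0 < a" "0 < b" "0 \<le> t"
  shows "\<bar>exp (-b*t) - exp (-a*t)\<bar> \<le> \<bar>b - a\<bar> / min a b"
proof (cases "a \<le> b")
  case True thus ?thesis using exp_rate_aux[of a b t] assms by (auto simp: min_def)
next
  case False thus ?thesis using exp_rate_aux[of b a t] assms by (auto simp: min_def)
qed



theorem proposition3:
  fixes mass :: real and A :: "real \<Rightarrow> real"
  assumes "mass > 0"
    and "\<And>\<gamma>. \<gamma> > 1 \<Longrightarrow> barenblatt_A_condition mass \<gamma> (A \<gamma>)"
  shows "uniform_limit UNIV (\<lambda>\<gamma> \<xi>. barenblatt_profile (A \<gamma>) \<gamma> \<xi>)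
           (\<lambda>\<xi>. mass / (2 * sqrt pi) * exp (- (\<xi>\<^sup>2) / 4)) (at_right 1)"
proof -
  note mass = assms(1)
  have ev: "\<forall>\<^sub>F g in at_right 1. 1 < g \<and> g < (2::real)"
    by (subst eventually_at_right[of 1 2]) (auto intro!: exI[of _ 2])
  define p where "p = (\<lambda>g::real. (g+1)/(g-1))"
  define K where "K = (\<lambda>g. p g * Ir (p g)^2)"
  have p1: "p g \<ge> 1" if "g > 1" for g using that unfolding p_def by (simp add: field_simps)
  have Klim: "(K \<longlongrightarrow> pi/2) (at_right 1)"
  proof (rule tendsto_sandwich[of "\<lambda>g. pi/(2*g)" K _ "\<lambda>g. g*pi/(g+1)"])
    show "\<forall>\<^sub>F g in at_right 1. pi/(2*g) \<le> K g"
      using ev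
    proof (rule eventually_mono)
      fix g :: real assume g: "1 < g \<and> g < 2"
      have "(p g - 1) / (p g + 1) = 1 / g" using g unfolding p_def by (simp add: field_simps)
      thus "pi/(2*g) \<le> K g" using Ir_bounds(1)[OF p1[of g]] g unfolding K_def by simp
    qed
    show "\<forall>\<^sub>F g in at_right 1. K g \<le> g*pi/(g+1)"
      using ev
    proof (rule eventually_mono)
      fix g :: real assume g: "1 < g \<and> g < 2"
      have hp: "p g * (g-1) = g+1" using g unfolding p_def by (simp add: field_simps)
      have "(p g + 1) * (g + 1) = 2 * g * p g" using hp by algebra
      moreover have "p g > 0" using p1[of g] g by simp
      ultimately have "(p g + 1) / p g = 2*g/(g+1)" using g by (simp add: field_simps)
      hence "(p g + 1) / p g * (pi/2) = 2*g/(g+1) * (pi/2)" by (simp only:)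
      also have "\<dots> = g*pi/(g+1)" using g by (simp add: field_simps)
      finally have "(p g + 1) / p g * (pi/2) = g*pi/(g+1)" .
      thus "K g \<le> g*pi/(g+1)" using Ir_bounds(2)[OF p1[of g]] g unfolding K_def by simp
    qed
    show "((\<lambda>g. pi/(2*g)) \<longlongrightarrow> pi/2) (at_right (1::real))"
      by (auto intro!: tendsto_eq_intros tendsto_ident_at)
    show "((\<lambda>g. g*pi/(g+1)) \<longlongrightarrow> pi/2) (at_right (1::real))"
      by (auto intro!: tendsto_eq_intros tendsto_ident_at)
  qed
  define B where "B = barenblatt_B"
  define C where "C = (\<lambda>g. A g powr (p g / 2))"
  define c where "c = mass / (2 * sqrt pi)"
  have Bpos: "B g > 0" if "g > 1" for g using that unfolding B_def barenblatt_B_def by simp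
  have Apos: "A g > 0" if "g > 1" for g using assms(2)[OF that] unfolding barenblatt_A_condition_def by simp
  have Ceq: "C g = mass / sqrt (8 * g * K g)" if g: "g > 1" for g
  proof -
    have cond: "2 * A g powr (p g / 2) * B g powr (-1/2) * Ir (p g) = mass"
    proof -
      have e1: "(g + 1) / (2 * (g - 1)) = p g / 2" unfolding p_def by simp
      have e2: "integral {0..pi/2} (\<lambda>\<theta>. cos \<theta> powr ((g + 1) / (g - 1))) = Ir (p g)"
        unfolding Ir_def p_def ..
      have "2 * A g powr ((g + 1) / (2 * (g - 1))) * B g powr (-1/2)
          * integral {0..pi/2} (\<lambda>\<theta>. cos \<theta> powr ((g + 1) / (g - 1))) = mass"
        using assms(2)[OF g] unfolding barenblatt_A_condition_def B_def by blast
      thus ?thesis unfolding e1 e2 .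
    qed
    have b: "B g powr (-1/2) = 1 / sqrt (B g)"
      using Bpos[OF g] by (simp add: powr_minus_divide powr_half_sqrt)
    have I0: "Ir (p g) \<ge> 0" using Ir_nonneg[of "p g"] p1[OF g] by simp
    have k: "sqrt (8 * g * K g) = sqrt (8 * g * p g) * Ir (p g)"
      unfolding K_def using I0 by (simp add: real_sqrt_mult mult.assoc)
    have nz: "g - 1 \<noteq> 0" "g + 1 \<noteq> 0" "g \<noteq> 0" using g by auto
    have "8 * g * p g * B g = 4" using nz unfolding p_def B_def barenblatt_B_def by (simp add: divide_simps)
    hence sb: "sqrt (8 * g * p g) * sqrt (B g) = 2" by (metis real_sqrt_mult real_sqrt_four)
    have "C g * sqrt (8 * g * K g) = C g * Ir (p g) * sqrt (8 * g * p g)" using k by simp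
    also have "\<dots> = C g * Ir (p g) * (2 / sqrt (B g))" using sb Bpos[OF g] by (simp add: field_simps)
    also have "\<dots> = mass" using cond b unfolding C_def by (simp add: ac_simps)
    finally have *: "C g * sqrt (8 * g * K g) = mass" .
    hence "sqrt (8 * g * K g) \<noteq> 0" using mass by auto
    with * show ?thesis by (simp add: field_simps)
  qed
  have Clim: "(C \<longlongrightarrow> c) (at_right 1)"
  proof -
    have "((\<lambda>g. mass / sqrt (8 * g * K g)) \<longlongrightarrow> mass / sqrt (8 * 1 * (pi/2))) (at_right 1)"
      by (intro tendsto_intros Klim tendsto_ident_at) simp
    moreover have "sqrt (8 * 1 * (pi/2)) = 2 * sqrt pi" by (simp add: real_sqrt_mult)
    moreover have "\<forall>\<^sub>F g in at_right 1. C g = mass / sqrt (8 * g * K g)"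
      using ev by (rule eventually_mono) (simp add: Ceq)
    ultimately show ?thesis unfolding c_def by (simp add: tendsto_cong)
  qed
  define m where "m = (\<lambda>g::real. 1/(g-1))"
  have Cpos: "C g > 0" if "g > 1" for g unfolding C_def using Apos[OF that] by simp
  have Aeq: "A g = C g powr (2 * (g-1) / (g+1))" if g: "g > 1" for g
  proof -
    have "C g powr (2 * (g-1) / (g+1)) = A g powr (p g / 2 * (2 * (g-1) / (g+1)))"
      unfolding C_def by (simp add: powr_powr)
    also have "p g / 2 * (2 * (g-1) / (g+1)) = 1" using g unfolding p_def by (simp add: divide_simps)
    finally show ?thesis using Apos[OF g] by simp
  qed
  have Ameq: "A g powr m g = C g powr (2 / (g+1))" if g: "g > 1" for g
  proof -
    have "C g powr (2 / (g+1)) = A g powr (p g / 2 * (2 / (g+1)))"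
      unfolding C_def by (simp add: powr_powr)
    also have "p g / 2 * (2 / (g+1)) = m g" using g unfolding p_def m_def by (simp add: divide_simps) (simp add: algebra_simps)
    finally show ?thesis by simp
  qed
  have cpos: "c > 0" unfolding c_def using mass by simp
  have Alim: "(A \<longlongrightarrow> 1) (at_right 1)"
  proof -
    have "((\<lambda>g. C g powr (2 * (g-1) / (g+1))) \<longlongrightarrow> c powr (2 * (1-1) / (1+1))) (at_right (1::real))"
      using cpos by (intro tendsto_intros Clim tendsto_ident_at) auto
    hence "((\<lambda>g. C g powr (2 * (g-1) / (g+1))) \<longlongrightarrow> 1) (at_right (1::real))" using cpos by simp
    moreover have "\<forall>\<^sub>F g in at_right 1. A g = C g powr (2 * (g-1) / (g+1))"
      using ev by (rule eventually_mono) (simp add: Aeq)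
    ultimately show ?thesis by (simp add: tendsto_cong)
  qed
  have Amlim: "((\<lambda>g. A g powr m g) \<longlongrightarrow> c) (at_right 1)"
  proof -
    have "((\<lambda>g. C g powr (2 / (g+1))) \<longlongrightarrow> c powr (2 / (1+1))) (at_right (1::real))"
      using cpos by (intro tendsto_intros Clim tendsto_ident_at) auto
    hence "((\<lambda>g. C g powr (2 / (g+1))) \<longlongrightarrow> c) (at_right (1::real))" using cpos by simp
    moreover have "\<forall>\<^sub>F g in at_right 1. A g powr m g = C g powr (2 / (g+1))"
      using ev by (rule eventually_mono) (simp add: Ameq)
    ultimately show ?thesis by (simp add: tendsto_cong)
  qed
  define \<beta> where "\<beta> = (\<lambda>g. m g * B g / A g)"
  have blim: "(\<beta> \<longlongrightarrow> 1/4) (at_right 1)"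
  proof -
    have "((\<lambda>g. 1 / (2 * g * (g+1)) / A g) \<longlongrightarrow> 1 / (2 * 1 * (1+1)) / 1) (at_right (1::real))"
      by (intro tendsto_intros Alim tendsto_ident_at) auto
    hence "((\<lambda>g. 1 / (2 * g * (g+1)) / A g) \<longlongrightarrow> 1/4) (at_right (1::real))" by simp
    moreover have "\<forall>\<^sub>F g in at_right 1. \<beta> g = 1 / (2 * g * (g+1)) / A g"
      using ev
    proof (rule eventually_mono)
      fix g :: real assume g: "1 < g \<and> g < 2"
      hence nz: "g - 1 \<noteq> 0" "g + 1 \<noteq> 0" "g \<noteq> 0" by auto
      have "m g * B g = 1 / (2 * g * (g+1))" unfolding m_def B_def barenblatt_B_def using nz
        by (simp add: divide_simps)
      thus "\<beta> g = 1 / (2 * g * (g+1)) / A g" unfolding \<beta>_def by simp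
    qed
    ultimately show ?thesis by (simp add: tendsto_cong)
  qed
  define D where "D = (\<lambda>g. \<bar>A g powr m g - c\<bar> + A g powr m g * (4 * (g - 1))
      + A g powr m g * (\<bar>\<beta> g - 1/4\<bar> / min (1/4) (\<beta> g)))"
  have Dlim: "(D \<longlongrightarrow> 0) (at_right 1)"
  proof -
    have "(D \<longlongrightarrow> \<bar>c - c\<bar> + c * (4 * (1 - 1)) + c * (\<bar>1/4 - 1/4\<bar> / min (1/4) (1/4))) (at_right (1::real))"
      unfolding D_def by (intro tendsto_intros Amlim blim tendsto_ident_at) auto
    thus ?thesis by simp
  qed
  have bound: "\<forall>\<^sub>F g in at_right 1. \<forall>\<xi>. \<bar>barenblatt_profile (A g) g \<xi> - mass / (2 * sqrt pi) * exp (- (\<xi>\<^sup>2) / 4)\<bar> \<le> D g"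
    using ev
  proof (rule eventually_mono)
    fix g :: real assume g: "1 < g \<and> g < 2"
    hence g1: "g > 1" by simp
    have A0: "A g > 0" by (rule Apos[OF g1])
    have B0: "B g > 0" by (rule Bpos[OF g1])
    have m1: "m g \<ge> 1" using g unfolding m_def by (simp add: field_simps)
    have b0: "\<beta> g > 0" unfolding \<beta>_def using A0 B0 m1 by simp
    define Am where "Am = A g powr m g"
    have Am0: "Am \<ge> 0" unfolding Am_def by simp
    show "\<forall>\<xi>. \<bar>barenblatt_profile (A g) g \<xi> - mass / (2 * sqrt pi) * exp (- (\<xi>\<^sup>2) / 4)\<bar> \<le> D g"
    proof
      fix \<xi> :: real
      define s where "s = \<beta> g * \<xi>\<^sup>2"
      have s0: "s \<ge> 0" unfolding s_def using b0 by simp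
      define h where "h = max (1 - s / m g) 0 powr m g"
      have sm: "s / m g = B g * \<xi>\<^sup>2 / A g" unfolding s_def \<beta>_def using m1 by simp
      have "max (A g - B g * \<xi>\<^sup>2) 0 = A g * max (1 - s / m g) 0"
      proof -
        have "A g - B g * \<xi>\<^sup>2 = A g * (1 - s / m g)" unfolding sm using A0 by (simp add: field_simps)
        thus ?thesis using A0 by (simp add: max_mult_distrib_left)
      qed
      hence prof: "barenblatt_profile (A g) g \<xi> = Am * h"
        unfolding barenblatt_profile_def Am_def h_def using A0
        by (simp add: powr_mult m_def B_def)
      have tgt: "mass / (2 * sqrt pi) * exp (- (\<xi>\<^sup>2) / 4) = c * exp (- (1/4) * \<xi>\<^sup>2)"
        unfolding c_def by simp
      define e where "e = exp (- (\<beta> g) * \<xi>\<^sup>2)"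
      define e' where "e' = exp (- (1/4) * \<xi>\<^sup>2)"
      have e'1: "e' \<le> 1" "e' \<ge> 0" unfolding e'_def by auto
      have h1: "\<bar>h - e\<bar> \<le> 4 * (g - 1)"
      proof -
        have "\<bar>h - exp (-s)\<bar> \<le> 4 / m g" unfolding h_def by (rule h_approx[OF m1 s0])
        moreover have "4 / m g = 4 * (g - 1)" unfolding m_def by simp
        moreover have "exp (-s) = e" unfolding e_def s_def by simp
        ultimately show ?thesis by simp
      qed
      have h2: "\<bar>e - e'\<bar> \<le> \<bar>\<beta> g - 1/4\<bar> / min (1/4) (\<beta> g)"
        unfolding e_def e'_def using exp_rate[of "1/4" "\<beta> g" "\<xi>\<^sup>2"] b0 by simp
      have eq: "Am * h - c * e' = (Am - c) * e' + Am * (h - e) + Am * (e - e')" by (simp add: algebra_simps)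
      have "\<bar>Am * h - c * e'\<bar> \<le> \<bar>(Am - c) * e'\<bar> + \<bar>Am * (h - e)\<bar> + \<bar>Am * (e - e')\<bar>"
        unfolding eq by (rule order_trans[OF abs_triangle_ineq add_mono[OF abs_triangle_ineq order_refl]])
      also have "\<dots> = \<bar>Am - c\<bar> * e' + Am * \<bar>h - e\<bar> + Am * \<bar>e - e'\<bar>"
        using Am0 e'1 by (simp only: abs_mult abs_of_nonneg)
      also have "\<dots> \<le> \<bar>Am - c\<bar> * 1 + Am * (4 * (g - 1)) + Am * (\<bar>\<beta> g - 1/4\<bar> / min (1/4) (\<beta> g))"
        using e'1 Am0 h1 h2 by (intro add_mono mult_left_mono) auto
      also have "\<dots> = D g" unfolding D_def Am_def by simp
      finally show "\<bar>barenblatt_profile (A g) g \<xi> - mass / (2 * sqrt pi) * exp (- (\<xi>\<^sup>2) / 4)\<bar> \<le> D g"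
        unfolding prof tgt e'_def .
    qed
  qed
  show ?thesis
    unfolding uniform_limit_iff
  proof (intro allI impI)
    fix \<epsilon> :: real assume "\<epsilon> > 0"
    hence "\<forall>\<^sub>F g in at_right 1. D g < \<epsilon>" using Dlim by (rule order_tendstoD(2)[rotated])
    with bound show "\<forall>\<^sub>F g in at_right 1. \<forall>\<xi>\<in>UNIV. dist (barenblatt_profile (A g) g \<xi>) (mass / (2 * sqrt pi) * exp (- (\<xi>\<^sup>2) / 4)) < \<epsilon>"
    proof eventually_elim
      case (elim g)
      thus ?case by (auto simp: dist_real_def intro: le_less_trans)
    qed
  qed

qed

end
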